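(* Let $p$ be an odd prime and $G=\langle a,b : (a[a^p,b])^p,\ b^p\rangle$. Then for every $i\geq1$, $G/\gamma_i(G)\cong (C_p*C_p)/\gamma_i(C_p*C_p)$; that is, $G$ is weakly para-$(C_p*C_p)$.
   Context: Commutator convention: $[x,y]=x^{-1}y^{-1}xy$. $C_p*C_p=\langle a,b:a^p,b^p\rangle$. Lower central series: $\gamma_1(G)=G$, $\gamma_k(G)=[G,\gamma_{k-1}(G)]$. *)

theory Defs
  imports "HOL-Algebra.Algebra"
begin

datatype gen = GA | GB

(* Letters: (x, True) is x, (x, False) is x^{-1}.  Words are lists of letters. *)
type_synonym 'g word = "('g \<times> bool) list"

fun red_push :: "'g \<times> bool \<Rightarrow> 'g word \<Rightarrow> 'g word" where
  "red_push x [] = [x]"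
| "red_push x (y # ys) = (if fst x = fst y \<and> snd x \<noteq> snd y then ys else x # y # ys)"

definition reduce :: "'g word \<Rightarrow> 'g word" where
  "reduce w = foldr red_push w []"

definition word_inv :: "'g word \<Rightarrow> 'g word" where
  "word_inv w = rev (map (\<lambda>(x, s). (x, \<not> s)) w)"

definition free_grp :: "('g word) monoid" where
  "free_grp = \<lparr> carrier = {w. reduce w = w}, monoid.mult = (\<lambda>u v. reduce (u @ v)), one = [] \<rparr>"

definition gen_elt :: "'g \<Rightarrow> 'g word" where
  "gen_elt x = [(x, True)]"

(* Commutator convention [x,y] = x^{-1} y^{-1} x y *)
definition comm :: "('a, 'b) monoid_scheme \<Rightarrow> 'a \<Rightarrow> 'a \<Rightarrow> 'a" where
  "comm G x y = inv\<^bsub>G\<^esub> x \<otimes>\<^bsub>G\<^esub> inv\<^bsub>G\<^esub> y \<otimes>\<^bsub>G\<^esub> x \<otimes>\<^bsub>G\<^esub> y"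

(* Lower central series: lcs G 1 = G, lcs G (k+1) = [G, lcs G k].
   (lcs G 0 is set to G as well; it is never used.) *)
fun lcs :: "('a, 'b) monoid_scheme \<Rightarrow> nat \<Rightarrow> 'a set" where
  "lcs G 0 = carrier G"
| "lcs G (Suc 0) = carrier G"
| "lcs G (Suc (Suc k)) =
     generate G {comm G x y | x y. x \<in> carrier G \<and> y \<in> lcs G (Suc k)}"

definition normal_closure :: "('a, 'b) monoid_scheme \<Rightarrow> 'a set \<Rightarrow> 'a set" where
  "normal_closure G R =
     generate G {g \<otimes>\<^bsub>G\<^esub> r \<otimes>\<^bsub>G\<^esub> inv\<^bsub>G\<^esub> g | g r. g \<in> carrier G \<and> r \<in> R}"

definition presented :: "'g word set \<Rightarrow> ('g word set) monoid" where
  "presented R = free_grp Mod normal_closure free_grp R"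

definition a_gen :: "gen word" where "a_gen = gen_elt GA"
definition b_gen :: "gen word" where "b_gen = gen_elt GB"

definition CpCp :: "nat \<Rightarrow> (gen word set) monoid" where
  "CpCp p = presented {a_gen [^]\<^bsub>free_grp\<^esub> p, b_gen [^]\<^bsub>free_grp\<^esub> p}"

definition Gp :: "nat \<Rightarrow> (gen word set) monoid" where
  "Gp p = presented
     {(a_gen \<otimes>\<^bsub>free_grp\<^esub> comm free_grp (a_gen [^]\<^bsub>free_grp\<^esub> p) b_gen) [^]\<^bsub>free_grp\<^esub> p,
      b_gen [^]\<^bsub>free_grp\<^esub> p}"

end

theory Submission
  imports Defs
begin


definition cancel :: "'g \<times> bool \<Rightarrow> 'g \<times> bool \<Rightarrow> bool" where
  "cancel x y = (fst x = fst y \<and> snd x \<noteq> snd y)"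

definition iv :: "'g \<times> bool \<Rightarrow> 'g \<times> bool" where "iv x = (fst x, \<not> snd x)"

fun isred :: "'g word \<Rightarrow> bool" where
  "isred [] = True"
| "isred [x] = True"
| "isred (x # y # ys) = (\<not> cancel x y \<and> isred (y # ys))"

lemma cancel_iv: "cancel x y \<longleftrightarrow> y = iv x"
  by (cases x; cases y) (auto simp: cancel_def iv_def)

lemma iv_iv[simp]: "iv (iv x) = x" by (cases x) (auto simp: iv_def)

lemma reduce_Nil[simp]: "reduce [] = []" by (simp add: reduce_def)
lemma reduce_Cons: "reduce (x # w) = red_push x (reduce w)" by (simp add: reduce_def)
lemma reduce_append: "reduce (u @ v) = foldr red_push u (reduce v)" by (simp add: reduce_def)

lemma isred_tl: "isred (x # w) \<Longrightarrow> isred w"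
  by (cases w) auto

lemma isred_red_push: "isred w \<Longrightarrow> isred (red_push x w)"
proof (cases w)
  case (Cons y ys)
  assume "isred w" then show ?thesis using Cons by (cases ys) (auto simp: cancel_def)
qed simp

lemma isred_foldr: "isred w \<Longrightarrow> isred (foldr red_push u w)"
  by (induction u) (auto intro: isred_red_push)

lemma isred_reduce: "isred (reduce w)"
  unfolding reduce_def by (rule isred_foldr) simp

lemma isred_reduce_id: "isred w \<Longrightarrow> reduce w = w"
proof (induction w)
  case (Cons x w)
  then have "reduce w = w" using isred_tl by blast
  then show ?case using Cons.prems by (cases w) (auto simp: reduce_Cons cancel_def)
qed simp

lemma reduce_id_iff: "reduce w = w \<longleftrightarrow> isred w"
  by (metis isred_reduce isred_reduce_id)

lemma red_push_cancel: "isred w \<Longrightarrow> red_push x (red_push (iv x) w) = w"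
proof (cases w)
  case Nil then show ?thesis by (simp add: iv_def)
next
  case (Cons y ys)
  assume r: "isred w"
  show ?thesis
  proof (cases "y = x")
    case True
    then show ?thesis using Cons r by (cases ys) (auto simp: iv_def cancel_def)
  next
    case False
    then have "\<not> (fst (iv x) = fst y \<and> snd (iv x) \<noteq> snd y)"
      by (cases x; cases y) (auto simp: iv_def)
    then show ?thesis using Cons by (auto simp: iv_def)
  qed
qed

lemma red_push_cancel2: "isred w \<Longrightarrow> red_push (iv x) (red_push x w) = w"
  using red_push_cancel[of w "iv x"] by simp

lemma foldr_push: "isred r \<Longrightarrow> isred w \<Longrightarrow>
   foldr red_push (red_push x r) w = red_push x (foldr red_push r w)"
proof (cases r)
  case (Cons y ys)
  assume r: "isred r" and w: "isred w"
  show ?thesis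
  proof (cases "cancel x y")
    case True
    then have "y = iv x" by (simp add: cancel_iv)
    moreover have "red_push x r = ys" using Cons True by (simp add: cancel_def)
    ultimately show ?thesis using Cons red_push_cancel[OF isred_foldr[OF w, of ys], of x]
      by simp
  next
    case False then show ?thesis using Cons by (auto simp: cancel_def)
  qed
qed simp

lemma foldr_reduce: "isred w \<Longrightarrow> foldr red_push (reduce u) w = foldr red_push u w"
proof (induction u)
  case (Cons x u)
  then show ?case by (simp add: reduce_Cons foldr_push isred_reduce)
qed simp

lemma word_inv_Cons: "word_inv (x # u) = word_inv u @ [iv x]"
  by (cases x) (simp add: word_inv_def iv_def)

lemma word_inv_Nil[simp]: "word_inv [] = []" by (simp add: word_inv_def)

lemma foldr_word_inv: "isred w \<Longrightarrow> foldr red_push (word_inv u) (foldr red_push u w) = w"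
proof (induction u)
  case (Cons x u)
  then show ?case by (simp add: word_inv_Cons red_push_cancel2 isred_foldr)
qed simp

lemma isred_snoc: "isred (xs @ [y]) \<longleftrightarrow> isred xs \<and> (xs = [] \<or> \<not> cancel (last xs) y)"
proof (induction xs)
  case (Cons x xs)
  then show ?case by (cases xs) auto
qed simp

lemma word_inv_hd: "u \<noteq> [] \<Longrightarrow> last (word_inv u) = iv (hd u)"
  by (cases u) (auto simp: word_inv_Cons)

lemma isred_word_inv: "isred u \<Longrightarrow> isred (word_inv u)"
proof (induction u)
  case (Cons x u)
  have iu: "isred u" using Cons.prems isred_tl by blast
  have nc: "u = [] \<or> \<not> cancel x (hd u)" using Cons.prems by (cases u) auto
  have "word_inv u = [] \<longleftrightarrow> u = []" by (simp add: word_inv_def)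
  moreover have "u \<noteq> [] \<Longrightarrow> \<not> cancel (iv (hd u)) (iv x)" using nc
    by (auto simp: cancel_def iv_def)
  ultimately show ?case using Cons.IH iu
    by (auto simp: word_inv_Cons isred_snoc word_inv_hd)
qed simp

lemma free_carrier: "carrier free_grp = {w. isred w}"
  by (auto simp: free_grp_def reduce_id_iff)

lemma free_mult: "u \<otimes>\<^bsub>free_grp\<^esub> v = reduce (u @ v)"
  by (simp add: free_grp_def)

lemma free_one: "\<one>\<^bsub>free_grp\<^esub> = []"
  by (simp add: free_grp_def)

lemma group_free: "group (free_grp :: 'g word monoid)"
proof (rule groupI)
  fix x y z :: "'g word"
  assume x: "x \<in> carrier free_grp" and y: "y \<in> carrier free_grp" and z: "z \<in> carrier free_grp"
  then have ix: "isred x" and iy: "isred y" and iz: "isred z" by (auto simp: free_carrier)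
  show "x \<otimes>\<^bsub>free_grp\<^esub> y \<in> carrier free_grp"
    by (simp add: free_carrier free_mult isred_reduce)
  show "x \<otimes>\<^bsub>free_grp\<^esub> y \<otimes>\<^bsub>free_grp\<^esub> z = x \<otimes>\<^bsub>free_grp\<^esub> (y \<otimes>\<^bsub>free_grp\<^esub> z)"
  proof -
    have e: "foldr red_push x y = reduce (x @ y)" using iy by (simp add: reduce_append isred_reduce_id)
    have "reduce (reduce (x @ y) @ z) = foldr red_push (reduce (x @ y)) z"
      using iz by (simp only: reduce_append isred_reduce_id)
    also have "\<dots> = foldr red_push x (foldr red_push y z)"
      using iz by (simp add: foldr_reduce)
    also have "\<dots> = reduce (x @ reduce (y @ z))"
      using iz by (simp only: reduce_append isred_reduce_id isred_foldr)
    finally show ?thesis by (simp add: free_mult)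
  qed
next
  show "\<one>\<^bsub>free_grp\<^esub> \<in> carrier free_grp" by (simp add: free_one free_carrier)
next
  fix x :: "'g word" assume "x \<in> carrier free_grp"
  then have ix: "isred x" by (simp add: free_carrier)
  then show "\<one>\<^bsub>free_grp\<^esub> \<otimes>\<^bsub>free_grp\<^esub> x = x"
    by (simp add: free_one free_mult isred_reduce_id)
  have "reduce (word_inv x @ x) = []"
    using foldr_word_inv[of "[]" x] ix
    by (simp add: reduce_append isred_reduce_id reduce_def)
  then show "\<exists>y\<in>carrier free_grp. y \<otimes>\<^bsub>free_grp\<^esub> x = \<one>\<^bsub>free_grp\<^esub>"
    using isred_word_inv[OF ix] by (auto simp: free_carrier free_mult free_one)
qed

lemma gen_in: "gen_elt x \<in> carrier free_grp"
  by (simp add: gen_elt_def free_carrier)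



context group begin

lemma cancel_l1: "x \<in> carrier G \<Longrightarrow> y \<in> carrier G \<Longrightarrow> inv x \<otimes> (x \<otimes> y) = y"
  by (simp add: m_assoc[symmetric])
lemma cancel_l2: "x \<in> carrier G \<Longrightarrow> y \<in> carrier G \<Longrightarrow> x \<otimes> (inv x \<otimes> y) = y"
  by (simp add: m_assoc[symmetric])

lemma comm_closed[intro,simp]: "x \<in> carrier G \<Longrightarrow> y \<in> carrier G \<Longrightarrow> comm G x y \<in> carrier G"
  by (simp add: comm_def)

lemma conj_comm:
  assumes "g \<in> carrier G" "x \<in> carrier G" "y \<in> carrier G"
  shows "g \<otimes> comm G x y \<otimes> inv g = comm G (g \<otimes> x \<otimes> inv g) (g \<otimes> y \<otimes> inv g)"
  using assms by (simp add: comm_def m_assoc inv_mult_group cancel_l1 cancel_l2)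

lemma inv_comm': "x \<in> carrier G \<Longrightarrow> y \<in> carrier G \<Longrightarrow> inv (comm G x y) = comm G y x"
  by (simp add: comm_def m_assoc inv_mult_group)

lemma comm_one_left: "y \<in> carrier G \<Longrightarrow> comm G \<one> y = \<one>"
  by (simp add: comm_def)

lemma lcs_normal: "lcs G k \<lhd> G"
proof (induction k rule: nat_less_induct)
  case (1 n)
  show ?case
  proof (cases n)
    case 0 then show ?thesis by (simp add: normal_self)
  next
    case (Suc m)
    show ?thesis
    proof (cases m)
      case 0 then show ?thesis using Suc by (simp add: normal_self)
    next
      case (Suc k)
      have IH: "lcs G (Suc k) \<lhd> G" using 1 \<open>n = Suc m\<close> Suc by simp
      then have sub: "lcs G (Suc k) \<subseteq> carrier G" using normal_imp_subgroup subgroup.subset by blast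
      have "generate G {comm G x y | x y. x \<in> carrier G \<and> y \<in> lcs G (Suc k)} \<lhd> G"
      proof (rule normal_generateI)
        show "{comm G x y | x y. x \<in> carrier G \<and> y \<in> lcs G (Suc k)} \<subseteq> carrier G"
          using sub by auto
      next
        fix h g assume h: "h \<in> {comm G x y | x y. x \<in> carrier G \<and> y \<in> lcs G (Suc k)}"
          and g: "g \<in> carrier G"
        then obtain x y where xy: "h = comm G x y" "x \<in> carrier G" "y \<in> lcs G (Suc k)" by blast
        have "g \<otimes> y \<otimes> inv g \<in> lcs G (Suc k)" using normal.inv_op_closed2[OF IH g xy(3)] .
        then show "g \<otimes> h \<otimes> inv g \<in> {comm G x y | x y. x \<in> carrier G \<and> y \<in> lcs G (Suc k)}"
          using xy g sub conj_comm[of g x y] by auto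
      qed
      then show ?thesis using \<open>n = Suc m\<close> Suc by simp
    qed
  qed
qed

lemma lcs_subgroup: "subgroup (lcs G k) G"
  using lcs_normal normal_imp_subgroup by blast

lemma lcs_sub: "lcs G k \<subseteq> carrier G"
  using lcs_subgroup subgroup.subset by blast

lemma comm_in_lcs:
  assumes "k \<ge> 1" "x \<in> carrier G" "y \<in> lcs G k"
  shows "comm G x y \<in> lcs G (Suc k)"
proof -
  obtain m where k: "k = Suc m" using assms(1) by (cases k) auto
  have e: "lcs G (Suc k) = generate G {comm G x y | x y. x \<in> carrier G \<and> y \<in> lcs G (Suc m)}"
    unfolding k by (simp only: lcs.simps)
  have "comm G x y \<in> {comm G x y | x y. x \<in> carrier G \<and> y \<in> lcs G (Suc m)}"
    using assms(2,3) unfolding k by blast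
  then show ?thesis unfolding e by (rule generate.incl)
qed

lemma comm_in_lcs2:
  assumes "k \<ge> 1" "x \<in> lcs G k" "y \<in> carrier G"
  shows "comm G x y \<in> lcs G (Suc k)"
proof -
  have xc: "x \<in> carrier G" using lcs_sub assms(2) by (rule subsetD)
  have "inv (comm G y x) \<in> lcs G (Suc k)"
    by (rule subgroup.m_inv_closed[OF lcs_subgroup comm_in_lcs[OF assms(1) assms(3) assms(2)]])
  then show ?thesis by (simp only: inv_comm'[OF assms(3) xc])
qed

lemma normal_closure_normal:
  assumes "R \<subseteq> carrier G" shows "normal_closure G R \<lhd> G"
  unfolding normal_closure_def
proof (rule normal_generateI)
  show "{g \<otimes> r \<otimes> inv g |g r. g \<in> carrier G \<and> r \<in> R} \<subseteq> carrier G" using assms by auto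
next
  fix h g assume "h \<in> {g \<otimes> r \<otimes> inv g |g r. g \<in> carrier G \<and> r \<in> R}" and g: "g \<in> carrier G"
  then obtain g' r where h: "h = g' \<otimes> r \<otimes> inv g'" "g' \<in> carrier G" "r \<in> R" by blast
  have rc: "r \<in> carrier G" using h assms by auto
  have "g \<otimes> h \<otimes> inv g = (g \<otimes> g') \<otimes> r \<otimes> inv (g \<otimes> g')"
    using h rc g by (simp add: m_assoc inv_mult_group)
  then show "g \<otimes> h \<otimes> inv g \<in> {g \<otimes> r \<otimes> inv g |g r. g \<in> carrier G \<and> r \<in> R}"
    using h g by blast
qed

lemma normal_closure_incl:
  assumes "R \<subseteq> carrier G" shows "R \<subseteq> normal_closure G R"
proof
  fix r assume r: "r \<in> R"
  then have "r = \<one> \<otimes> r \<otimes> inv \<one>" using assms by auto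
  then have "r \<in> {g \<otimes> r \<otimes> inv g |g r. g \<in> carrier G \<and> r \<in> R}" using r by blast
  then show "r \<in> normal_closure G R" unfolding normal_closure_def by (rule generate.incl)
qed

lemma normal_closure_min:
  assumes "K \<lhd> G" "R \<subseteq> K" shows "normal_closure G R \<subseteq> K"
  unfolding normal_closure_def
proof (rule generate_subgroup_incl)
  show "subgroup K G" using assms normal_imp_subgroup by blast
  show "{g \<otimes> r \<otimes> inv g |g r. g \<in> carrier G \<and> r \<in> R} \<subseteq> K"
  proof
    fix z assume "z \<in> {g \<otimes> r \<otimes> inv g |g r. g \<in> carrier G \<and> r \<in> R}"
    then obtain g r where "z = g \<otimes> r \<otimes> inv g" "g \<in> carrier G" "r \<in> R" by blast
    then show "z \<in> K" using normal.inv_op_closed2[OF assms(1)] assms(2) by auto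
  qed
qed

lemma coset_eq_sub:
  assumes "N \<lhd> G" "x \<in> carrier G" "N #> x = N" shows "x \<in> N"
proof -
  have "x \<in> N #> x" using rcos_self[OF assms(2)] assms(1) normal_imp_subgroup by blast
  then show ?thesis using assms(3) by simp
qed

lemma coset_eq_mod:
  assumes "N \<lhd> G" "x \<in> carrier G" "g \<in> carrier G" "N #> x = N #> g" shows "x \<otimes> inv g \<in> N"
proof -
  have s: "subgroup N G" using assms normal_imp_subgroup by blast
  have "x \<in> N #> g" using rcos_self[OF assms(2) s] assms by simp
  then show ?thesis using subgroup.rcos_module_imp[OF s is_group assms(3)] by blast
qed

end

lemma hom_comm:
  assumes "group G" "group H" "h \<in> hom G H" "x \<in> carrier G" "y \<in> carrier G"
  shows "h (comm G x y) = comm H (h x) (h y)"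
proof -
  interpret group_hom G H h using assms by (simp add: group_hom_def group_hom_axioms_def)
  show ?thesis using assms by (simp add: comm_def)
qed

lemma lcs_surj:
  assumes "group G" "group H" "h \<in> hom G H" "h ` carrier G = carrier H"
  shows "h ` lcs G (Suc k) = lcs H (Suc k)"
proof (induction k)
  case 0 then show ?case using assms by simp
next
  case (Suc k)
  interpret gh: group_hom G H h using assms by (simp add: group_hom_def group_hom_axioms_def)
  let ?S = "{comm G x y | x y. x \<in> carrier G \<and> y \<in> lcs G (Suc k)}"
  have sub: "?S \<subseteq> carrier G" using group.lcs_sub[OF assms(1)] group.comm_closed[OF assms(1)] by blast
  have "h ` ?S = {comm H x y | x y. x \<in> carrier H \<and> y \<in> lcs H (Suc k)}"
  proof
    show "h ` ?S \<subseteq> {comm H x y | x y. x \<in> carrier H \<and> y \<in> lcs H (Suc k)}"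
    proof
      fix z assume "z \<in> h ` ?S"
      then obtain x y where "z = h (comm G x y)" "x \<in> carrier G" "y \<in> lcs G (Suc k)" by blast
      moreover have "y \<in> carrier G" using calculation group.lcs_sub[OF assms(1)] by blast
      ultimately show "z \<in> {comm H x y | x y. x \<in> carrier H \<and> y \<in> lcs H (Suc k)}"
        using hom_comm[OF assms(1-3)] Suc.IH by (auto intro!: exI)
    qed
  next
    show "{comm H x y | x y. x \<in> carrier H \<and> y \<in> lcs H (Suc k)} \<subseteq> h ` ?S"
    proof
      fix z assume "z \<in> {comm H x y | x y. x \<in> carrier H \<and> y \<in> lcs H (Suc k)}"
      then obtain x y where z: "z = comm H x y" "x \<in> carrier H" "y \<in> lcs H (Suc k)" by blast
      obtain x' where x': "x' \<in> carrier G" "x = h x'" using z assms(4) by blast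
      obtain y' where y': "y' \<in> lcs G (Suc k)" "y = h y'" using z Suc.IH by blast
      have "y' \<in> carrier G" using y' group.lcs_sub[OF assms(1)] by blast
      then have "z = h (comm G x' y')" using hom_comm[OF assms(1-3) x'(1)] x' y' z by simp
      then show "z \<in> h ` ?S" using x' y' by blast
    qed
  qed
  then show ?case using gh.generate_img[OF sub] by simp
qed

lemma (in group) key_power:
  assumes "a \<in> carrier G" "b \<in> carrier G"
    and "(a \<otimes> comm G (a [^] (p::nat)) b) [^] p = \<one>"
    and "k \<ge> 1"
  shows "a [^] p \<in> lcs G k"
  using assms(4)
proof (induction k rule: dec_induct)
  case base then show ?case using assms by simp
next
  case (step k)
  let ?L = "lcs G (Suc k)"
  have nL: "?L \<lhd> G" by (rule lcs_normal)
  interpret gh: group_hom G "G Mod ?L" "\<lambda>x. ?L #> x"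
    using normal.r_coset_hom_Mod[OF nL] normal.factorgroup_is_group[OF nL]
    by (simp add: group_hom_def group_hom_axioms_def is_group)
  let ?c = "comm G (a [^] p) b"
  have cc: "?c \<in> carrier G" using assms by simp
  have cL: "?c \<in> ?L" using comm_in_lcs2[OF step(1) step(3) assms(2)] .
  have pc: "?L #> ?c = ?L" using subgroup.rcos_const[OF lcs_subgroup is_group cL] .
  have "?L #> (a \<otimes> ?c) = (?L #> a) \<otimes>\<^bsub>G Mod ?L\<^esub> (?L #> ?c)"
    using gh.hom_mult assms cc by blast
  also have "\<dots> = ?L #> a"
    using pc assms gh.H.r_one[of "?L #> a"] gh.hom_closed[of a] by simp
  finally have e1: "?L #> (a \<otimes> ?c) = ?L #> a" .
  have "?L #> (a [^] p) = (?L #> a) [^]\<^bsub>G Mod ?L\<^esub> p" using gh.hom_nat_pow assms by blast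
  also have "\<dots> = (?L #> (a \<otimes> ?c)) [^]\<^bsub>G Mod ?L\<^esub> p" using e1 by simp
  also have "\<dots> = ?L #> ((a \<otimes> ?c) [^] p)"
    by (rule gh.hom_nat_pow[symmetric]) (use assms cc in simp)
  also have "\<dots> = ?L #> \<one>" using assms by simp
  also have "\<dots> = ?L" using gh.hom_one by simp
  finally show ?case using coset_eq_sub[OF nL] assms by simp
qed



definition MM :: "('a, 'b) monoid_scheme \<Rightarrow> 'a set \<Rightarrow> nat \<Rightarrow> 'a set" where
  "MM G N i = {h \<in> carrier G. N #>\<^bsub>G\<^esub> h \<in> lcs (G Mod N) i}"

lemma (in group) quot_lcs_iso:
  assumes nN: "N \<lhd> G"
  shows "MM G N i \<lhd> G \<and> (G Mod N) Mod lcs (G Mod N) i \<cong> G Mod MM G N i"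
proof -
  let ?Q = "G Mod N"
  let ?L = "lcs ?Q i"
  have gQ: "group ?Q" using normal.factorgroup_is_group[OF nN] .
  have nL: "?L \<lhd> ?Q" using group.lcs_normal[OF gQ] .
  have gQL: "group (?Q Mod ?L)" using normal.factorgroup_is_group[OF nL] .
  have pi: "(\<lambda>x. N #> x) \<in> hom G ?Q" using normal.r_coset_hom_Mod[OF nN] .
  have rho: "(\<lambda>x. ?L #>\<^bsub>?Q\<^esub> x) \<in> hom ?Q (?Q Mod ?L)" using normal.r_coset_hom_Mod[OF nL] .
  let ?f = "(\<lambda>x. ?L #>\<^bsub>?Q\<^esub> x) \<circ> (\<lambda>x. N #> x)"
  have fh: "?f \<in> hom G (?Q Mod ?L)" using Group.hom_compose[OF pi rho] .
  interpret gh: group_hom G "?Q Mod ?L" ?f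
    by (rule group_hom.intro[OF is_group gQL]) (rule group_hom_axioms.intro[OF fh])
  have surj: "?f ` carrier G = carrier (?Q Mod ?L)"
  proof -
    have "?f ` carrier G = (\<lambda>x. ?L #>\<^bsub>?Q\<^esub> x) ` ((\<lambda>x. N #> x) ` carrier G)"
      by (rule image_comp[symmetric])
    also have "\<dots> = carrier (?Q Mod ?L)"
      by (simp only: carrier_FactGroup)
    finally show ?thesis .
  qed
  have eqv: "(?L #>\<^bsub>?Q\<^esub> (N #> x) = ?L) \<longleftrightarrow> N #> x \<in> ?L" if x: "x \<in> carrier G" for x
  proof -
    have xq: "N #> x \<in> carrier ?Q" using hom_in_carrier[OF pi x] .
    show ?thesis
    proof
      show "?L #>\<^bsub>?Q\<^esub> (N #> x) = ?L \<Longrightarrow> N #> x \<in> ?L"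
        by (rule group.coset_eq_sub[OF gQ nL xq])
      show "N #> x \<in> ?L \<Longrightarrow> ?L #>\<^bsub>?Q\<^esub> (N #> x) = ?L"
        by (rule subgroup.rcos_const[OF group.lcs_subgroup[OF gQ] gQ])
    qed
  qed
  have ker: "kernel G (?Q Mod ?L) ?f = MM G N i"
    unfolding kernel_def MM_def one_FactGroup comp_def using eqv by blast
  have "G Mod MM G N i \<cong> ?Q Mod ?L" using gh.FactGroup_iso[OF surj] unfolding ker .
  moreover have nM: "MM G N i \<lhd> G" using gh.normal_kernel unfolding ker .
  ultimately show ?thesis
    using group.iso_sym[OF normal.factorgroup_is_group[OF nM]] by (intro conjI) auto
qed

lemma (in group) N_sub_MM:
  assumes nN: "N \<lhd> G" shows "N \<subseteq> MM G N i"
proof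
  fix x assume x: "x \<in> N"
  have gQ: "group (G Mod N)" using normal.factorgroup_is_group[OF nN] .
  have xc: "x \<in> carrier G" using x nN normal_imp_subgroup subgroup.subset by blast
  have "N #> x = N" using subgroup.rcos_const[OF normal_imp_subgroup[OF nN] is_group x] .
  moreover have "N \<in> lcs (G Mod N) i"
    using subgroup.one_closed[OF group.lcs_subgroup[OF gQ]] by simp
  ultimately show "x \<in> MM G N i" using xc by (simp add: MM_def)
qed

lemma (in group) MM_decomp:
  assumes nN: "N \<lhd> G" and i: "i \<ge> 1" and x: "x \<in> MM G N i"
  shows "\<exists>g \<in> lcs G i. x \<otimes> inv g \<in> N"
proof -
  obtain k where k: "i = Suc k" using i by (cases i) auto
  have gQ: "group (G Mod N)" using normal.factorgroup_is_group[OF nN] .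
  have pi: "(\<lambda>x. N #> x) \<in> hom G (G Mod N)" using normal.r_coset_hom_Mod[OF nN] .
  have surj: "(\<lambda>x. N #> x) ` carrier G = carrier (G Mod N)"
    by (simp add: carrier_FactGroup)
  have img: "(\<lambda>x. N #> x) ` lcs G i = lcs (G Mod N) i"
    unfolding k using lcs_surj[OF is_group gQ pi surj] .
  have xc: "x \<in> carrier G" and "N #> x \<in> lcs (G Mod N) i" using x by (auto simp: MM_def)
  then obtain g where g: "g \<in> lcs G i" "N #> x = N #> g" using img by (metis imageE)
  have gc: "g \<in> carrier G" using g lcs_sub by blast
  show ?thesis using coset_eq_mod[OF nN xc gc g(2)] g by blast
qed

lemma (in group) lcs_sub_MM:
  assumes nN: "N \<lhd> G" shows "lcs G i \<subseteq> MM G N i"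
proof
  fix x assume x: "x \<in> lcs G i"
  show "x \<in> MM G N i"
  proof (cases i)
    case 0
    have gQ: "group (G Mod N)" using normal.factorgroup_is_group[OF nN] .
    have "N #> x \<in> carrier (G Mod N)" using x 0 by (auto simp: carrier_FactGroup)
    then show ?thesis using x 0 by (simp add: MM_def)
  next
    case (Suc k)
    have gQ: "group (G Mod N)" using normal.factorgroup_is_group[OF nN] .
    have pi: "(\<lambda>x. N #> x) \<in> hom G (G Mod N)" using normal.r_coset_hom_Mod[OF nN] .
    have surj: "(\<lambda>x. N #> x) ` carrier G = carrier (G Mod N)"
      by (simp add: carrier_FactGroup)
    have img: "(\<lambda>x. N #> x) ` lcs G i = lcs (G Mod N) i"
      unfolding Suc using lcs_surj[OF is_group gQ pi surj] .
    have "x \<in> carrier G" using x lcs_sub by blast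
    then show ?thesis using x img by (auto simp: MM_def)
  qed
qed

lemma (in group) MM_sub:
  assumes nN: "N \<lhd> G" and nN': "N' \<lhd> G" and i: "i \<ge> 1"
    and sub: "N \<subseteq> MM G N' i"
  shows "MM G N i \<subseteq> MM G N' i"
proof
  fix x assume x: "x \<in> MM G N i"
  obtain g where g: "g \<in> lcs G i" "x \<otimes> inv g \<in> N" using MM_decomp[OF nN i x] by blast
  have sM: "subgroup (MM G N' i) G" using quot_lcs_iso[OF nN'] normal_imp_subgroup by blast
  have gM: "g \<in> MM G N' i" using g lcs_sub_MM[OF nN'] by blast
  have xc: "x \<in> carrier G" using x by (simp add: MM_def)
  have gc: "g \<in> carrier G" using g lcs_sub by blast
  have "(x \<otimes> inv g) \<otimes> g \<in> MM G N' i"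
    using subgroup.m_closed[OF sM] g sub gM by blast
  moreover have "(x \<otimes> inv g) \<otimes> g = x" using xc gc by (simp add: m_assoc)
  ultimately show "x \<in> MM G N' i" by simp
qed



lemma (in group) relator_lemma:
  assumes nN: "N \<lhd> G" and a: "a \<in> carrier G" and b: "b \<in> carrier G"
    and ap: "a [^] (p::nat) \<in> N"
  shows "(a \<otimes> comm G (a [^] p) b) [^] p \<in> N"
proof -
  let ?Q = "G Mod N"
  have gQ: "group ?Q" using normal.factorgroup_is_group[OF nN] .
  have pi: "(\<lambda>x. N #> x) \<in> hom G ?Q" using normal.r_coset_hom_Mod[OF nN] .
  interpret gh: group_hom G ?Q "\<lambda>x. N #> x"
    by (rule group_hom.intro[OF is_group gQ]) (rule group_hom_axioms.intro[OF pi])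
  have apc: "a [^] p \<in> carrier G" using a by simp
  have c: "comm G (a [^] p) b \<in> carrier G" using apc b by simp
  have e0: "N #> (a [^] p) = \<one>\<^bsub>?Q\<^esub>"
    using subgroup.rcos_const[OF normal_imp_subgroup[OF nN] is_group ap] by simp
  have "N #> ((a \<otimes> comm G (a [^] p) b) [^] p) = (N #> (a \<otimes> comm G (a [^] p) b)) [^]\<^bsub>?Q\<^esub> p"
    by (rule gh.hom_nat_pow) (use a c in simp)
  also have "N #> (a \<otimes> comm G (a [^] p) b) = (N #> a) \<otimes>\<^bsub>?Q\<^esub> comm ?Q (N #> (a [^] p)) (N #> b)"
    using gh.hom_mult[OF a c] hom_comm[OF is_group gQ pi apc b] by simp
  also have "\<dots> = N #> a"
    using e0 group.comm_one_left[OF gQ] gh.hom_closed a b gh.H.r_one[OF gh.hom_closed[OF a]] by simp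
  also have "(N #> a) [^]\<^bsub>?Q\<^esub> p = N #> (a [^] p)"
    by (rule gh.hom_nat_pow[symmetric, OF a])
  finally have "N #> ((a \<otimes> comm G (a [^] p) b) [^] p) = N" using e0 by simp
  then show ?thesis using coset_eq_sub[OF nN] a c by simp
qed

lemma (in group) power_in_MM:
  assumes nN: "N \<lhd> G" and a: "a \<in> carrier G" and b: "b \<in> carrier G"
    and r: "(a \<otimes> comm G (a [^] (p::nat)) b) [^] p \<in> N" and i: "i \<ge> 1"
  shows "a [^] p \<in> MM G N i"
proof -
  let ?Q = "G Mod N"
  have gQ: "group ?Q" using normal.factorgroup_is_group[OF nN] .
  have pi: "(\<lambda>x. N #> x) \<in> hom G ?Q" using normal.r_coset_hom_Mod[OF nN] .
  interpret gh: group_hom G ?Q "\<lambda>x. N #> x"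
    by (rule group_hom.intro[OF is_group gQ]) (rule group_hom_axioms.intro[OF pi])
  have apc: "a [^] p \<in> carrier G" using a by simp
  have c: "comm G (a [^] p) b \<in> carrier G" using apc b by simp
  have "\<one>\<^bsub>?Q\<^esub> = N #> ((a \<otimes> comm G (a [^] p) b) [^] p)"
    using subgroup.rcos_const[OF normal_imp_subgroup[OF nN] is_group r] by simp
  also have "\<dots> = (N #> (a \<otimes> comm G (a [^] p) b)) [^]\<^bsub>?Q\<^esub> p"
    by (rule gh.hom_nat_pow) (use a c in simp)
  also have "N #> (a \<otimes> comm G (a [^] p) b) = (N #> a) \<otimes>\<^bsub>?Q\<^esub> comm ?Q (N #> (a [^] p)) (N #> b)"
    using gh.hom_mult[OF a c] hom_comm[OF is_group gQ pi apc b] by simp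
  also have "N #> (a [^] p) = (N #> a) [^]\<^bsub>?Q\<^esub> p"
    by (rule gh.hom_nat_pow[OF a])
  finally have rel: "((N #> a) \<otimes>\<^bsub>?Q\<^esub> comm ?Q ((N #> a) [^]\<^bsub>?Q\<^esub> p) (N #> b)) [^]\<^bsub>?Q\<^esub> p = \<one>\<^bsub>?Q\<^esub>"
    by simp
  have "(N #> a) [^]\<^bsub>?Q\<^esub> p \<in> lcs ?Q i"
    by (rule group.key_power[OF gQ gh.hom_closed[OF a] gh.hom_closed[OF b] rel i])
  then have "N #> (a [^] p) \<in> lcs ?Q i" using gh.hom_nat_pow[OF a] by simp
  then show ?thesis using apc by (simp add: MM_def)
qed

theorem mainTheorem12:
  fixes p :: nat and i :: nat
  assumes "Factorial_Ring.prime p" and "odd p" and "i \<ge> 1"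
  shows "(Gp p) Mod (lcs (Gp p) i) \<cong> (CpCp p) Mod (lcs (CpCp p) i)"
proof -
  let ?F = "free_grp :: gen word monoid"
  interpret F: group ?F by (rule group_free)
  have a: "a_gen \<in> carrier ?F" by (simp add: a_gen_def gen_in)
  have b: "b_gen \<in> carrier ?F" by (simp add: b_gen_def gen_in)
  let ?ap = "a_gen [^]\<^bsub>?F\<^esub> p"
  let ?bp = "b_gen [^]\<^bsub>?F\<^esub> p"
  let ?rg = "(a_gen \<otimes>\<^bsub>?F\<^esub> comm ?F ?ap b_gen) [^]\<^bsub>?F\<^esub> p"
  have apc: "?ap \<in> carrier ?F" using a by simp
  have bpc: "?bp \<in> carrier ?F" using b by simp
  have rgc: "?rg \<in> carrier ?F" using a b apc by simp
  let ?NG = "normal_closure ?F {?rg, ?bp}"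
  let ?NC = "normal_closure ?F {?ap, ?bp}"
  have RG: "{?rg, ?bp} \<subseteq> carrier ?F" using rgc bpc by simp
  have RC: "{?ap, ?bp} \<subseteq> carrier ?F" using apc bpc by simp
  have nG: "?NG \<lhd> ?F" by (rule F.normal_closure_normal[OF RG])
  have nC: "?NC \<lhd> ?F" by (rule F.normal_closure_normal[OF RC])
  have iG: "{?rg, ?bp} \<subseteq> ?NG" by (rule F.normal_closure_incl[OF RG])
  have iC: "{?ap, ?bp} \<subseteq> ?NC" by (rule F.normal_closure_incl[OF RC])
  have GC: "?NG \<subseteq> ?NC"
  proof (rule F.normal_closure_min[OF nC])
    have "?rg \<in> ?NC" using F.relator_lemma[OF nC a b] iC by simp
    then show "{?rg, ?bp} \<subseteq> ?NC" using iC by simp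
  qed
  have qG: "MM ?F ?NG i \<lhd> ?F \<and> (?F Mod ?NG) Mod lcs (?F Mod ?NG) i \<cong> ?F Mod MM ?F ?NG i"
    by (rule F.quot_lcs_iso[OF nG])
  have qC: "MM ?F ?NC i \<lhd> ?F \<and> (?F Mod ?NC) Mod lcs (?F Mod ?NC) i \<cong> ?F Mod MM ?F ?NC i"
    by (rule F.quot_lcs_iso[OF nC])
  have CMG: "?NC \<subseteq> MM ?F ?NG i"
  proof (rule F.normal_closure_min)
    show "MM ?F ?NG i \<lhd> ?F" using qG by blast
    have "?ap \<in> MM ?F ?NG i" using F.power_in_MM[OF nG a b _ assms(3)] iG by simp
    moreover have "?bp \<in> MM ?F ?NG i" using F.N_sub_MM[OF nG] iG by blast
    ultimately show "{?ap, ?bp} \<subseteq> MM ?F ?NG i" by simp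
  qed
  have GMC: "?NG \<subseteq> MM ?F ?NC i" using GC F.N_sub_MM[OF nC] by blast
  have E: "MM ?F ?NG i = MM ?F ?NC i"
    using F.MM_sub[OF nG nC assms(3) GMC] F.MM_sub[OF nC nG assms(3) CMG] by blast
  have gQC: "group ((?F Mod ?NC) Mod lcs (?F Mod ?NC) i)"
    using normal.factorgroup_is_group[OF group.lcs_normal[OF normal.factorgroup_is_group[OF nC]]] .
  have "(?F Mod ?NG) Mod lcs (?F Mod ?NG) i \<cong> (?F Mod ?NC) Mod lcs (?F Mod ?NC) i"
  proof -
    have "?F Mod MM ?F ?NG i \<cong> (?F Mod ?NC) Mod lcs (?F Mod ?NC) i"
      unfolding E by (rule group.iso_sym[OF gQC conjunct2[OF qC]])
    then show ?thesis by (rule iso_trans[OF conjunct2[OF qG]])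
  qed
  then show ?thesis by (simp add: Gp_def CpCp_def presented_def)
qed

end
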